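(* The set $\{\phi_{j_1,j_2,j_3}\;:\;(j_1,j_2,j_3)\in\mathbf J\}$ of genus two Schur polynomials is a $\mathbb C$-basis of $\mathcal H$.
   Context: A triple $(j_1,j_2,j_3)$ of nonnegative integers is admissible if $|j_1-j_2|\le j_3\le j_1+j_2$ and $j_1+j_2+j_3$ is even; $\mathbf J$ denotes the set of admissible triples. Let $\mathcal H=\mathbb C[x_{12}^{\pm1},x_{13}^{\pm1},x_{23}^{\pm1}]^{\mathbb Z_2\times\mathbb Z_2\times\mathbb Z_2}=\mathbb C[x_{12}+x_{12}^{-1},x_{13}+x_{13}^{-1},x_{23}+x_{23}^{-1}]$. For $a,b\in\{\pm1\}$ set $K_{a,b}(j_1,j_2,j_3)=ab\,\frac{(aj_1+bj_2+j_3+a+b+2)(aj_1+bj_2-j_3+a+b)}{4(j_1+1)(j_2+1)}$. The genus two Schur polynomials $(\phi_{j_1,j_2,j_3})_{(j_1,j_2,j_3)\in\mathbf J}$ are the unique family in $\mathcal H$ with $\phi_{0,0,0}=1$ such that for all admissible $(j_1,j_2,j_3)$: $(x_{12}+x_{12}^{-1})\phi_{j_1,j_2,j_3}=\sum_{a,b\in\{\pm1\}}K_{a,b}(j_1,j_2,j_3)\phi_{j_1+a,j_2+b,j_3}$, $(x_{13}+x_{13}^{-1})\phi_{j_1,j_2,j_3}=\sum_{a,b\in\{\pm1\}}K_{a,b}(j_1,j_3,j_2)\phi_{j_1+a,j_2,j_3+b}$, $(x_{23}+x_{23}^{-1})\phi_{j_1,j_2,j_3}=\sum_{a,b\in\{\pm1\}}K_{a,b}(j_2,j_3,j_1)\phi_{j_1,j_2+a,j_3+b}$,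 where $\phi$ of a non-admissible triple is interpreted as $0$. *)

theory Defs
  imports "HOL-Computational_Algebra.Polynomial"
begin

text \<open>The algebra H = C[X12, X13, X23] with X_ij = x_ij + x_ij^(-1),
  realised as polynomials in three variables (nested univariate polynomials).\<close>

type_synonym H = "complex poly poly poly"

definition X12 :: H where "X12 = [:[:[:0, 1:]:]:]"
definition X13 :: H where "X13 = [:[:0, 1:]:]"
definition X23 :: H where "X23 = [:0, 1:]"

definition sc :: "complex \<Rightarrow> H" where "sc c = [:[:[:c:]:]:]"

definition admissible :: "int \<times> int \<times> int \<Rightarrow> bool" where
  "admissible t = (case t of (j1, j2, j3) \<Rightarrow>
     0 \<le> j1 \<and> 0 \<le> j2 \<and> 0 \<le> j3 \<and> \<bar>j1 - j2\<bar> \<le> j3 \<and> j3 \<le> j1 + j2 \<and> even (j1 + j2 + j3))"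

definition JJ :: "(int \<times> int \<times> int) set" where
  "JJ = {t. admissible t}"

definition K :: "int \<Rightarrow> int \<Rightarrow> int \<Rightarrow> int \<Rightarrow> int \<Rightarrow> complex" where
  "K a b j1 j2 j3 = of_int (a * b) *
     (of_int ((a*j1 + b*j2 + j3 + a + b + 2) * (a*j1 + b*j2 - j3 + a + b))
      / (4 * of_int ((j1 + 1) * (j2 + 1))))"

definition ext0 :: "(int \<times> int \<times> int \<Rightarrow> H) \<Rightarrow> int \<times> int \<times> int \<Rightarrow> H" where
  "ext0 phi t = (if admissible t then phi t else 0)"

definition schur_family :: "(int \<times> int \<times> int \<Rightarrow> H) \<Rightarrow> bool" where
  "schur_family phi \<longleftrightarrow>
     phi (0, 0, 0) = 1 \<and>
     (\<forall>j1 j2 j3. admissible (j1, j2, j3) \<longrightarrow>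
        X12 * phi (j1, j2, j3) =
          (\<Sum>a\<in>{-1, 1}. \<Sum>b\<in>{-1, 1}. sc (K a b j1 j2 j3) * ext0 phi (j1 + a, j2 + b, j3)) \<and>
        X13 * phi (j1, j2, j3) =
          (\<Sum>a\<in>{-1, 1}. \<Sum>b\<in>{-1, 1}. sc (K a b j1 j3 j2) * ext0 phi (j1 + a, j2, j3 + b)) \<and>
        X23 * phi (j1, j2, j3) =
          (\<Sum>a\<in>{-1, 1}. \<Sum>b\<in>{-1, 1}. sc (K a b j2 j3 j1) * ext0 phi (j1, j2 + a, j3 + b)))"

end

theory Submission
  imports Defs
begin

definition mc :: "H \<Rightarrow> nat \<times> nat \<times> nat \<Rightarrow> complex" where
  "mc p m = (case m of (a,b,c) \<Rightarrow> coeff (coeff (coeff p c) b) a)"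
definition tsum :: "nat \<times> nat \<times> nat \<Rightarrow> nat" where
  "tsum m = (case m of (a,b,c) \<Rightarrow> a+b+c)"
definition PP :: "nat \<Rightarrow> H set" where
  "PP n = {p. \<forall>m. mc p m \<noteq> 0 \<longrightarrow> tsum m \<le> n}"
definition tr :: "nat \<times> nat \<times> nat \<Rightarrow> int \<times> int \<times> int" where
  "tr m = (case m of (a,b,c) \<Rightarrow> (int (a+b), int (a+c), int (b+c)))"
definition untr :: "int \<times> int \<times> int \<Rightarrow> nat \<times> nat \<times> nat" where
  "untr t = (case t of (x,y,z) \<Rightarrow> (nat ((x+y-z) div 2), nat ((x-y+z) div 2), nat ((y+z-x) div 2)))"

lemma mc_add: "mc (p + q) m = mc p m + mc q m"
  by (cases m) (simp add: mc_def)
lemma mc_diff: "mc (p - q) m = mc p m - mc q m"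
  by (cases m) (simp add: mc_def)
lemma mc_zero[simp]: "mc 0 m = 0"
  by (cases m) (simp add: mc_def)
lemma mc_sum: "mc (sum f S) m = (\<Sum>x\<in>S. mc (f x) m)"
  by (cases m) (simp add: mc_def coeff_sum)
lemma mc_sc: "mc (sc k * p) m = k * mc p m"
  by (cases m) (simp add: mc_def sc_def)
lemma mc_one: "mc 1 m = (if m = (0,0,0) then 1 else 0)"
  by (cases m) (auto simp add: mc_def coeff_1)
lemma mc_X12: "mc (X12 * p) m = (if fst m > 0 then mc p (fst m - 1, snd m) else 0)"
  by (cases m) (auto simp add: mc_def X12_def coeff_pCons split: nat.splits)
lemma mc_X13: "mc (X13 * p) m = (if fst (snd m) > 0 then mc p (fst m, fst (snd m) - 1, snd (snd m)) else 0)"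
  by (cases m) (auto simp add: mc_def X13_def coeff_pCons split: nat.splits)
lemma mc_X23: "mc (X23 * p) m = (if snd (snd m) > 0 then mc p (fst m, fst (snd m), snd (snd m) - 1) else 0)"
  by (cases m) (auto simp add: mc_def X23_def coeff_pCons split: nat.splits)

lemma PP_mono: "p \<in> PP n \<Longrightarrow> n \<le> k \<Longrightarrow> p \<in> PP k"
  unfolding PP_def by force
lemma PP_add: "p \<in> PP n \<Longrightarrow> q \<in> PP n \<Longrightarrow> p + q \<in> PP n"
  unfolding PP_def by (auto simp: mc_add) (metis add.right_neutral)
lemma PP_diff: "p \<in> PP n \<Longrightarrow> q \<in> PP n \<Longrightarrow> p - q \<in> PP n"
  unfolding PP_def by (auto simp: mc_diff) (metis diff_zero)
lemma PP_sc: "p \<in> PP n \<Longrightarrow> sc k * p \<in> PP n"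
  unfolding PP_def by (auto simp: mc_sc)
lemma PP_zero: "0 \<in> PP n"
  unfolding PP_def by auto
lemma PP_sum: "finite S \<Longrightarrow> (\<And>x. x \<in> S \<Longrightarrow> f x \<in> PP n) \<Longrightarrow> sum f S \<in> PP n"
  by (induction S rule: finite_induct) (auto intro: PP_add PP_zero)

lemma adm_divs:
  assumes "admissible (x,y,z)"
  shows "2 * ((x+y-z) div 2) = x+y-z" "2 * ((x-y+z) div 2) = x-y+z" "2 * ((y+z-x) div 2) = y+z-x"
    "0 \<le> x+y-z" "0 \<le> x-y+z" "0 \<le> y+z-x"
proof -
  have e: "even (x+y+z)" and h: "\<bar>x - y\<bar> \<le> z" "z \<le> x + y" using assms by (auto simp: admissible_def)
  have "x+y-z = (x+y+z) - 2*z" "x-y+z = (x+y+z) - 2*y" "y+z-x = (x+y+z) - 2*x" by simp_all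
  hence "even (x+y-z)" "even (x-y+z)" "even (y+z-x)" using e by (metis dvd_diff dvd_triv_left)+
  thus "2 * ((x+y-z) div 2) = x+y-z" "2 * ((x-y+z) div 2) = x-y+z" "2 * ((y+z-x) div 2) = y+z-x"
    by simp_all
  show "0 \<le> x+y-z" "0 \<le> x-y+z" "0 \<le> y+z-x" using h by auto
qed

lemma tr_untr: "admissible t \<Longrightarrow> tr (untr t) = t"
proof -
  assume a: "admissible t"
  obtain x y z where t: "t = (x,y,z)" by (cases t)
  note d = adm_divs[OF a[unfolded t]]
  show ?thesis unfolding t tr_def untr_def using d by simp
qed
lemma untr_tr: "untr (tr m) = m"
  by (cases m) (auto simp: tr_def untr_def)
lemma tr_adm: "admissible (tr m)"
  by (cases m) (auto simp: tr_def admissible_def)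
lemma tsum_untr: "admissible (x,y,z) \<Longrightarrow> 2 * int (tsum (untr (x,y,z))) = x + y + z"
proof -
  assume a: "admissible (x,y,z)"
  note d = adm_divs[OF a]
  show ?thesis unfolding tsum_def untr_def using d by simp
qed

lemma sum_pm1: "(\<Sum>a\<in>{-1, 1::int}. f a) = f (-1) + f 1"
  by simp

lemma K11_nz: "0 \<le> x \<Longrightarrow> 0 \<le> y \<Longrightarrow> 0 \<le> z \<Longrightarrow> z \<le> x + y \<Longrightarrow> K 1 1 x y z \<noteq> 0"
proof -
  assume h: "0 \<le> x" "0 \<le> y" "0 \<le> z" "z \<le> x + y"
  have "(x + y + z + 1 + 1 + 2) * (x + y - z + 1 + 1) \<noteq> 0" using h by simp
  moreover have "(x+1)*(y+1) \<noteq> 0" using h by simp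
  ultimately show ?thesis unfolding K_def by (simp del: of_int_mult)
qed


lemma inj1: "\<And>m m'::nat\<times>nat\<times>nat. 0 < fst m \<Longrightarrow> 0 < fst m' \<Longrightarrow> (fst m - 1, snd m) = (fst m' - 1, snd m') \<Longrightarrow> m = m'"
  apply (clarsimp simp: prod_eq_iff) by arith
lemma inj2: "\<And>m m'::nat\<times>nat\<times>nat. 0 < fst (snd m) \<Longrightarrow> 0 < fst (snd m') \<Longrightarrow> (fst m, fst (snd m) - 1, snd (snd m)) = (fst m', fst (snd m') - 1, snd (snd m')) \<Longrightarrow> m = m'"
  apply (clarsimp simp: prod_eq_iff) by arith
lemma inj3: "\<And>m m'::nat\<times>nat\<times>nat. 0 < snd (snd m) \<Longrightarrow> 0 < snd (snd m') \<Longrightarrow> (fst m, fst (snd m), snd (snd m) - 1) = (fst m', fst (snd m'), snd (snd m') - 1) \<Longrightarrow> m = m'"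
  apply (clarsimp simp: prod_eq_iff) by arith

lemma step_generic:
  fixes X :: "H \<Rightarrow> H" and ok :: "nat \<times> nat \<times> nat \<Rightarrow> bool" and dn
  assumes hX: "\<And>p m. mc (X p) m = (if ok m then mc p (dn m) else 0)"
  and hdn: "\<And>m. ok m \<Longrightarrow> tsum (dn m) + 1 = tsum m"
  and hinj: "\<And>m m'. ok m \<Longrightarrow> ok m' \<Longrightarrow> dn m = dn m' \<Longrightarrow> m = m'"
  and ok0: "ok m0" and ts: "tsum m0 = Suc n"
  and q1: "q \<in> PP n" and q2: "mc q (dn m0) \<noteq> 0"
  and q3: "\<And>m'. tsum m' = n \<Longrightarrow> m' \<noteq> dn m0 \<Longrightarrow> mc q m' = 0"
  and eq: "X q = sc k * p + r" and k: "k \<noteq> 0" and r: "r \<in> PP n"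
  shows "p \<in> PP (Suc n) \<and> mc p m0 \<noteq> 0 \<and> (\<forall>m'. tsum m' = Suc n \<and> m' \<noteq> m0 \<longrightarrow> mc p m' = 0)"
proof -
  have key: "mc p m = (mc (X q) m - mc r m) / k" for m
  proof -
    have "mc (X q) m = k * mc p m + mc r m" using eq by (simp add: mc_add mc_sc)
    thus ?thesis using k by (simp add: field_simps)
  qed
  have XP: "tsum m \<le> Suc n" if "mc (X q) m \<noteq> 0" for m
  proof -
    have "ok m" "mc q (dn m) \<noteq> 0" using that hX[of q m] by (auto split: if_splits)
    moreover have "tsum (dn m) \<le> n" using q1 calculation(2) unfolding PP_def by blast
    ultimately show ?thesis using hdn[of m] by linarith
  qed
  have rz: "mc r m = 0" if "tsum m > n" for m
  proof (rule ccontr)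
    assume "mc r m \<noteq> 0" then have "tsum m \<le> n" using r unfolding PP_def by blast
    thus False using that by simp
  qed
  have A: "p \<in> PP (Suc n)"
    unfolding PP_def
  proof (clarify)
    fix m assume "mc p m \<noteq> 0"
    hence "mc (X q) m \<noteq> 0 \<or> mc r m \<noteq> 0" using key[of m] by auto
    moreover have "mc r m \<noteq> 0 \<Longrightarrow> tsum m \<le> Suc n" using r unfolding PP_def by fastforce
    ultimately show "tsum m \<le> Suc n" using XP by blast
  qed
  have B: "mc p m0 \<noteq> 0" using key[of m0] rz[of m0] ts hX[of q m0] ok0 q2 k by simp
  have C: "mc p m' = 0" if "tsum m' = Suc n" "m' \<noteq> m0" for m'
  proof -
    have "mc (X q) m' = 0"
    proof (cases "ok m'")
      case True
      hence "dn m' \<noteq> dn m0" using hinj ok0 that by blast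
      moreover have "tsum (dn m') = n" using hdn[OF True] that by simp
      ultimately show ?thesis using hX[of q m'] True q3 by simp
    next
      case False thus ?thesis using hX[of q m'] by simp
    qed
    thus ?thesis using key[of m'] rz[of m'] that by simp
  qed
  show ?thesis using A B C by blast
qed

definition good :: "(int \<times> int \<times> int \<Rightarrow> H) \<Rightarrow> nat \<times> nat \<times> nat \<Rightarrow> bool" where
  "good phi m = (phi (tr m) \<in> PP (tsum m) \<and> mc (phi (tr m)) m \<noteq> 0 \<and>
     (\<forall>m'. tsum m' = tsum m \<and> m' \<noteq> m \<longrightarrow> mc (phi (tr m)) m' = 0))"

lemma ext0_PP:
  assumes "\<And>m. tsum m \<le> n \<Longrightarrow> phi (tr m) \<in> PP n" and "x+y+z \<le> 2 * int n"
  shows "ext0 phi (x,y,z) \<in> PP n"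
proof (cases "admissible (x,y,z)")
  case True
  have "tsum (untr (x,y,z)) \<le> n" using tsum_untr[OF True] assms(2) by linarith
  hence "phi (tr (untr (x,y,z))) \<in> PP n" using assms(1) by blast
  thus ?thesis using True tr_untr[OF True] by (simp add: ext0_def)
next
  case False thus ?thesis by (simp add: ext0_def PP_zero)
qed


lemma main_good:
  assumes sf: "schur_family phi"
  shows "good phi m"
proof -
  have rec: "\<And>j1 j2 j3. admissible (j1, j2, j3) \<Longrightarrow>
        X12 * phi (j1, j2, j3) =
          (\<Sum>a\<in>{-1, 1}. \<Sum>b\<in>{-1, 1}. sc (K a b j1 j2 j3) * ext0 phi (j1 + a, j2 + b, j3)) \<and>
        X13 * phi (j1, j2, j3) =
          (\<Sum>a\<in>{-1, 1}. \<Sum>b\<in>{-1, 1}. sc (K a b j1 j3 j2) * ext0 phi (j1 + a, j2, j3 + b)) \<and>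
        X23 * phi (j1, j2, j3) =
          (\<Sum>a\<in>{-1, 1}. \<Sum>b\<in>{-1, 1}. sc (K a b j2 j3 j1) * ext0 phi (j1, j2 + a, j3 + b))"
    using sf unfolding schur_family_def by blast
  have "\<forall>m. tsum m = n \<longrightarrow> good phi m" for n
  proof (induction n rule: less_induct)
    case (less n)
    show ?case
    proof (cases n)
      case 0
      show ?thesis
      proof (intro allI impI)
        fix m assume "tsum m = n"
        obtain a b c where m: "m = (a,b,c)" by (cases m)
        show "good phi m" unfolding m
        proof -
        have "tsum (a,b,c) = n" using \<open>tsum m = n\<close> m by simp
        hence abc: "a = 0" "b = 0" "c = 0" using 0 by (auto simp: tsum_def)
        have p1: "phi (0,0,0) = 1" using sf unfolding schur_family_def by blast
        show "good phi (a,b,c)" unfolding good_def abc using p1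
          by (auto simp: tr_def tsum_def PP_def mc_one)
        qed
      qed
    next
      case (Suc n0)
      have IHg: "good phi m" if "tsum m = n0" for m using less Suc that by blast
      have IH: "phi (tr m) \<in> PP n0" if "tsum m \<le> n0" for m
      proof -
        have "tsum m < n" using that Suc by simp
        hence "good phi m" using less by blast
        thus ?thesis using PP_mono that unfolding good_def by blast
      qed
      show ?thesis
      proof (intro allI impI)
        fix m assume "tsum m = n"
        obtain a b c where m: "m = (a,b,c)" by (cases m)
        have ts: "tsum (a,b,c) = n" using \<open>tsum m = n\<close> m by simp
        have "good phi (a,b,c)"
        proof (cases a)
          case (Suc a0)
          define j1 where "j1 = int (a0+b)"
          define j2 where "j2 = int (a0+c)"
          define j3 where "j3 = int (b+c)"
          have trq: "tr (a0,b,c) = (j1,j2,j3)" by (simp add: tr_def j1_def j2_def j3_def)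
          have trp: "tr (a,b,c) = (j1+1,j2+1,j3)" by (simp add: tr_def j1_def j2_def j3_def Suc)
          have adm: "admissible (j1,j2,j3)" using tr_adm trq by metis
          have admp: "admissible (j1+1,j2+1,j3)" using tr_adm trp by metis
          have tsq: "tsum (a0,b,c) = n0" using ts Suc \<open>n = Suc n0\<close> by (simp add: tsum_def)
          have jsum: "j1 + j2 + j3 = 2 * int n0" using tsq by (simp add: tsum_def j1_def j2_def j3_def)
          define r where "r = sc (K (-1) (-1) j1 j2 j3) * ext0 phi (j1 - 1, j2 - 1, j3)
             + sc (K (-1) 1 j1 j2 j3) * ext0 phi (j1 - 1, j2 + 1, j3)
             + sc (K 1 (-1) j1 j2 j3) * ext0 phi (j1 + 1, j2 - 1, j3)"
          have eq: "X12 * phi (tr (a0,b,c)) = sc (K 1 1 j1 j2 j3) * phi (tr (a,b,c)) + r"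
            using conjunct1[OF rec[OF adm]] admp unfolding trq trp r_def
            by (simp add: ext0_def algebra_simps)
          have rP: "r \<in> PP n0" unfolding r_def
            by (intro PP_add PP_sc ext0_PP IH; use jsum in simp)
          have kz: "K 1 1 j1 j2 j3 \<noteq> 0"
            by (rule K11_nz) (simp_all add: j1_def j2_def j3_def)
          have gq: "good phi (a0,b,c)" using IHg tsq by blast
          have "phi (tr (a,b,c)) \<in> PP (Suc n0) \<and> mc (phi (tr (a,b,c))) (a,b,c) \<noteq> 0 \<and>
             (\<forall>m'. tsum m' = Suc n0 \<and> m' \<noteq> (a,b,c) \<longrightarrow> mc (phi (tr (a,b,c))) m' = 0)"
          proof (rule step_generic[where X = "\<lambda>p. X12 * p" and ok = "\<lambda>m. fst m > 0"
               and dn = "\<lambda>m. (fst m - 1, snd m)" and q = "phi (tr (a0,b,c))" and r = r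
               and k = "K 1 1 j1 j2 j3"])
            show "\<And>p m. mc (X12 * p) m = (if 0 < fst m then mc p (fst m - 1, snd m) else 0)"
              by (rule mc_X12)
            show "\<And>m. 0 < fst m \<Longrightarrow> tsum (fst m - 1, snd m) + 1 = tsum m"
              by (auto simp: tsum_def)
            show "\<And>(m::nat\<times>nat\<times>nat) m'. 0 < fst m \<Longrightarrow> 0 < fst m' \<Longrightarrow> (fst m - 1, snd m) = (fst m' - 1, snd m') \<Longrightarrow> m = m'"
              using inj1 by blast
            have gq3: "\<forall>m'. tsum m' = n0 \<and> m' \<noteq> (a0,b,c) \<longrightarrow> mc (phi (tr (a0,b,c))) m' = 0"
              using gq tsq unfolding good_def by simp
            show "\<And>m'. tsum m' = n0 \<Longrightarrow> m' \<noteq> (fst (a,b,c) - 1, snd (a,b,c)) \<Longrightarrow> mc (phi (tr (a0,b,c))) m' = 0"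
            proof -
              fix m' assume h1: "tsum m' = n0" and h2: "m' \<noteq> (fst (a,b,c) - 1, snd (a,b,c))"
              have e: "(fst (a,b,c) - 1, snd (a,b,c)) = (a0,b,c)" by (simp add: Suc)
              have "tsum m' = n0 \<and> m' \<noteq> (a0,b,c) \<longrightarrow> mc (phi (tr (a0,b,c))) m' = 0" using gq3 by (rule spec)
              thus "mc (phi (tr (a0,b,c))) m' = 0" using h1 h2 e by simp
            qed
            show "0 < fst (a,b,c)" using Suc by simp
            show "tsum (a,b,c) = Suc n0" using ts \<open>n = Suc n0\<close> by simp
            show "phi (tr (a0,b,c)) \<in> PP n0" using gq tsq unfolding good_def by simp
            have "(fst (a,b,c) - 1, snd (a,b,c)) = (a0,b,c)" by (simp add: Suc)
            thus "mc (phi (tr (a0,b,c))) (fst (a,b,c) - 1, snd (a,b,c)) \<noteq> 0" using gq unfolding good_def by simp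
            show "X12 * phi (tr (a0,b,c)) = sc (K 1 1 j1 j2 j3) * phi (tr (a,b,c)) + r" by (rule eq)
            show "K 1 1 j1 j2 j3 \<noteq> 0" by (rule kz)
            show "r \<in> PP n0" by (rule rP)
          qed
          thus ?thesis using ts \<open>n = Suc n0\<close> unfolding good_def by simp
        next
          case a0: 0
          show ?thesis
          proof (cases b)
            case (Suc b0)
          define j1 where "j1 = int b0"
          define j2 where "j2 = int c"
          define j3 where "j3 = int (b0+c)"
          have trq: "tr (0,b0,c) = (j1,j2,j3)" by (simp add: tr_def j1_def j2_def j3_def)
          have trp: "tr (a,b,c) = (j1+1,j2,j3+1)" by (simp add: tr_def j1_def j2_def j3_def Suc a0)
          have adm: "admissible (j1,j2,j3)" using tr_adm trq by metis
          have admp: "admissible (j1+1,j2,j3+1)" using tr_adm trp by metis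
          have tsq: "tsum (0,b0,c) = n0" using ts Suc a0 \<open>n = Suc n0\<close> by (simp add: tsum_def)
          have jsum: "j1 + j2 + j3 = 2 * int n0" using tsq by (simp add: tsum_def j1_def j2_def j3_def)
          define r where "r = sc (K (-1) (-1) j1 j3 j2) * ext0 phi (j1 - 1, j2, j3 - 1)
             + sc (K (-1) 1 j1 j3 j2) * ext0 phi (j1 - 1, j2, j3 + 1)
             + sc (K 1 (-1) j1 j3 j2) * ext0 phi (j1 + 1, j2, j3 - 1)"
          have eq: "X13 * phi (tr (0,b0,c)) = sc (K 1 1 j1 j3 j2) * phi (tr (a,b,c)) + r"
            using conjunct1[OF conjunct2[OF rec[OF adm]]] admp unfolding trq trp r_def
            by (simp add: ext0_def algebra_simps)
          have rP: "r \<in> PP n0" unfolding r_def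
            by (intro PP_add PP_sc ext0_PP IH; use jsum in simp)
          have kz: "K 1 1 j1 j3 j2 \<noteq> 0"
            by (rule K11_nz) (simp_all add: j1_def j2_def j3_def)
          have gq: "good phi (0,b0,c)" using IHg tsq by blast
          have "phi (tr (a,b,c)) \<in> PP (Suc n0) \<and> mc (phi (tr (a,b,c))) (a,b,c) \<noteq> 0 \<and>
             (\<forall>m'. tsum m' = Suc n0 \<and> m' \<noteq> (a,b,c) \<longrightarrow> mc (phi (tr (a,b,c))) m' = 0)"
          proof (rule step_generic[where X = "\<lambda>p. X13 * p" and ok = "\<lambda>m. fst (snd m) > 0"
               and dn = "\<lambda>m. (fst m, fst (snd m) - 1, snd (snd m))" and q = "phi (tr (0,b0,c))" and r = r
               and k = "K 1 1 j1 j3 j2"])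
            show "\<And>p m. mc (X13 * p) m = (if 0 < fst (snd m) then mc p (fst m, fst (snd m) - 1, snd (snd m)) else 0)"
              by (rule mc_X13)
            show "\<And>m. 0 < fst (snd m) \<Longrightarrow> tsum (fst m, fst (snd m) - 1, snd (snd m)) + 1 = tsum m"
              by (auto simp: tsum_def)
            show "\<And>(m::nat\<times>nat\<times>nat) m'. 0 < fst (snd m) \<Longrightarrow> 0 < fst (snd m') \<Longrightarrow> (fst m, fst (snd m) - 1, snd (snd m)) = (fst m', fst (snd m') - 1, snd (snd m')) \<Longrightarrow> m = m'"
              using inj2 by blast
            have gq3: "\<forall>m'. tsum m' = n0 \<and> m' \<noteq> (0,b0,c) \<longrightarrow> mc (phi (tr (0,b0,c))) m' = 0"
              using gq tsq unfolding good_def by simp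
            show "\<And>m'. tsum m' = n0 \<Longrightarrow> m' \<noteq> (fst (a,b,c), fst (snd (a,b,c)) - 1, snd (snd (a,b,c))) \<Longrightarrow> mc (phi (tr (0,b0,c))) m' = 0"
            proof -
              fix m' assume h1: "tsum m' = n0" and h2: "m' \<noteq> (fst (a,b,c), fst (snd (a,b,c)) - 1, snd (snd (a,b,c)))"
              have e: "(fst (a,b,c), fst (snd (a,b,c)) - 1, snd (snd (a,b,c))) = (0,b0,c)" by (simp add: Suc a0)
              have "tsum m' = n0 \<and> m' \<noteq> (0,b0,c) \<longrightarrow> mc (phi (tr (0,b0,c))) m' = 0" using gq3 by (rule spec)
              thus "mc (phi (tr (0,b0,c))) m' = 0" using h1 h2 e by simp
            qed
            show "0 < fst (snd (a,b,c))" using Suc by simp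
            show "tsum (a,b,c) = Suc n0" using ts \<open>n = Suc n0\<close> by simp
            show "phi (tr (0,b0,c)) \<in> PP n0" using gq tsq unfolding good_def by simp
            have "(fst (a,b,c), fst (snd (a,b,c)) - 1, snd (snd (a,b,c))) = (0,b0,c)" by (simp add: Suc a0)
            thus "mc (phi (tr (0,b0,c))) (fst (a,b,c), fst (snd (a,b,c)) - 1, snd (snd (a,b,c))) \<noteq> 0" using gq unfolding good_def by simp
            show "X13 * phi (tr (0,b0,c)) = sc (K 1 1 j1 j3 j2) * phi (tr (a,b,c)) + r" by (rule eq)
            show "K 1 1 j1 j3 j2 \<noteq> 0" by (rule kz)
            show "r \<in> PP n0" by (rule rP)
          qed
          thus ?thesis using ts \<open>n = Suc n0\<close> unfolding good_def by simp
          next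
            case b0: 0
            obtain c0 where Suc: "c = Suc c0" using ts a0 b0 \<open>n = Suc n0\<close> by (cases c) (auto simp: tsum_def)
          define j1 where "j1 = (0::int)"
          define j2 where "j2 = int c0"
          define j3 where "j3 = int c0"
          have trq: "tr (0,0,c0) = (j1,j2,j3)" by (simp add: tr_def j1_def j2_def j3_def)
          have trp: "tr (a,b,c) = (j1,j2+1,j3+1)" by (simp add: tr_def j1_def j2_def j3_def Suc a0 b0)
          have adm: "admissible (j1,j2,j3)" using tr_adm trq by metis
          have admp: "admissible (j1,j2+1,j3+1)" using tr_adm trp by metis
          have tsq: "tsum (0,0,c0) = n0" using ts Suc a0 b0 \<open>n = Suc n0\<close> by (simp add: tsum_def)
          have jsum: "j1 + j2 + j3 = 2 * int n0" using tsq by (simp add: tsum_def j1_def j2_def j3_def)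
          define r where "r = sc (K (-1) (-1) j2 j3 j1) * ext0 phi (j1, j2 - 1, j3 - 1)
             + sc (K (-1) 1 j2 j3 j1) * ext0 phi (j1, j2 - 1, j3 + 1)
             + sc (K 1 (-1) j2 j3 j1) * ext0 phi (j1, j2 + 1, j3 - 1)"
          have eq: "X23 * phi (tr (0,0,c0)) = sc (K 1 1 j2 j3 j1) * phi (tr (a,b,c)) + r"
            using conjunct2[OF conjunct2[OF rec[OF adm]]] admp unfolding trq trp r_def
            by (simp add: ext0_def algebra_simps)
          have rP: "r \<in> PP n0" unfolding r_def
            by (intro PP_add PP_sc ext0_PP IH; use jsum in simp)
          have kz: "K 1 1 j2 j3 j1 \<noteq> 0"
            by (rule K11_nz) (simp_all add: j1_def j2_def j3_def)
          have gq: "good phi (0,0,c0)" using IHg tsq by blast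
          have "phi (tr (a,b,c)) \<in> PP (Suc n0) \<and> mc (phi (tr (a,b,c))) (a,b,c) \<noteq> 0 \<and>
             (\<forall>m'. tsum m' = Suc n0 \<and> m' \<noteq> (a,b,c) \<longrightarrow> mc (phi (tr (a,b,c))) m' = 0)"
          proof (rule step_generic[where X = "\<lambda>p. X23 * p" and ok = "\<lambda>m. snd (snd m) > 0"
               and dn = "\<lambda>m. (fst m, fst (snd m), snd (snd m) - 1)" and q = "phi (tr (0,0,c0))" and r = r
               and k = "K 1 1 j2 j3 j1"])
            show "\<And>p m. mc (X23 * p) m = (if 0 < snd (snd m) then mc p (fst m, fst (snd m), snd (snd m) - 1) else 0)"
              by (rule mc_X23)
            show "\<And>m. 0 < snd (snd m) \<Longrightarrow> tsum (fst m, fst (snd m), snd (snd m) - 1) + 1 = tsum m"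
              by (auto simp: tsum_def)
            show "\<And>(m::nat\<times>nat\<times>nat) m'. 0 < snd (snd m) \<Longrightarrow> 0 < snd (snd m') \<Longrightarrow> (fst m, fst (snd m), snd (snd m) - 1) = (fst m', fst (snd m'), snd (snd m') - 1) \<Longrightarrow> m = m'"
              using inj3 by blast
            have gq3: "\<forall>m'. tsum m' = n0 \<and> m' \<noteq> (0,0,c0) \<longrightarrow> mc (phi (tr (0,0,c0))) m' = 0"
              using gq tsq unfolding good_def by simp
            show "\<And>m'. tsum m' = n0 \<Longrightarrow> m' \<noteq> (fst (a,b,c), fst (snd (a,b,c)), snd (snd (a,b,c)) - 1) \<Longrightarrow> mc (phi (tr (0,0,c0))) m' = 0"
            proof -
              fix m' assume h1: "tsum m' = n0" and h2: "m' \<noteq> (fst (a,b,c), fst (snd (a,b,c)), snd (snd (a,b,c)) - 1)"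
              have e: "(fst (a,b,c), fst (snd (a,b,c)), snd (snd (a,b,c)) - 1) = (0,0,c0)" by (simp add: Suc a0 b0)
              have "tsum m' = n0 \<and> m' \<noteq> (0,0,c0) \<longrightarrow> mc (phi (tr (0,0,c0))) m' = 0" using gq3 by (rule spec)
              thus "mc (phi (tr (0,0,c0))) m' = 0" using h1 h2 e by simp
            qed
            show "0 < snd (snd (a,b,c))" using Suc by simp
            show "tsum (a,b,c) = Suc n0" using ts \<open>n = Suc n0\<close> by simp
            show "phi (tr (0,0,c0)) \<in> PP n0" using gq tsq unfolding good_def by simp
            have "(fst (a,b,c), fst (snd (a,b,c)), snd (snd (a,b,c)) - 1) = (0,0,c0)" by (simp add: Suc a0 b0)
            thus "mc (phi (tr (0,0,c0))) (fst (a,b,c), fst (snd (a,b,c)), snd (snd (a,b,c)) - 1) \<noteq> 0" using gq unfolding good_def by simp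
            show "X23 * phi (tr (0,0,c0)) = sc (K 1 1 j2 j3 j1) * phi (tr (a,b,c)) + r" by (rule eq)
            show "K 1 1 j2 j3 j1 \<noteq> 0" by (rule kz)
            show "r \<in> PP n0" by (rule rP)
          qed
          thus ?thesis using ts \<open>n = Suc n0\<close> unfolding good_def by simp
          qed
        qed
        thus "good phi m" using m by simp
      qed
    qed
  qed
  thus ?thesis by blast
qed


lemma sc_add: "sc (x + y) = sc x + sc y" by (simp add: sc_def)
lemma sc_zero: "sc 0 = 0" by (simp add: sc_def)

lemma mc_ext: assumes "\<And>m. mc p m = mc q m" shows "p = q"
proof (rule poly_eqI)
  fix c show "coeff p c = coeff q c"
  proof (rule poly_eqI)
    fix b show "coeff (coeff p c) b = coeff (coeff q c) b"
    proof (rule poly_eqI)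
      fix a show "coeff (coeff (coeff p c) b) a = coeff (coeff (coeff q c) b) a"
        using assms[of "(a,b,c)"] by (simp add: mc_def)
    qed
  qed
qed

lemma mc_bound: "\<exists>n. \<forall>m. mc p m \<noteq> 0 \<longrightarrow> tsum m < n"
proof -
  define D1 where "D1 = (\<Sum>i\<le>degree p. degree (coeff p i))"
  define D2 where "D2 = (\<Sum>i\<le>degree p. \<Sum>j\<le>D1. degree (coeff (coeff p i) j))"
  have "tsum m < degree p + D1 + D2 + 1" if "mc p m \<noteq> 0" for m
  proof -
    obtain a b c where m: "m = (a,b,c)" by (cases m)
    have h: "coeff (coeff (coeff p c) b) a \<noteq> 0" using that m by (simp add: mc_def)
    hence hb: "coeff (coeff p c) b \<noteq> 0" by auto
    hence hc: "coeff p c \<noteq> 0" by auto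
    have c: "c \<le> degree p" using hc le_degree by blast
    have b: "b \<le> degree (coeff p c)" using hb le_degree by blast
    have a: "a \<le> degree (coeff (coeff p c) b)" using h le_degree by blast
    have "degree (coeff p c) \<le> D1" unfolding D1_def
      by (rule member_le_sum[where f = "\<lambda>i. degree (coeff p i)"]) (use c in auto)
    hence b1: "b \<le> D1" using b by simp
    have "degree (coeff (coeff p c) b) \<le> (\<Sum>j\<le>D1. degree (coeff (coeff p c) j))"
      by (rule member_le_sum[where f = "\<lambda>j. degree (coeff (coeff p c) j)"]) (use b1 in auto)
    also have "\<dots> \<le> D2" unfolding D2_def
      by (rule member_le_sum[where f = "\<lambda>i. \<Sum>j\<le>D1. degree (coeff (coeff p i) j)"]) (use c in auto)
    finally have "a \<le> D2" using a by simp
    thus ?thesis using b1 c m by (simp add: tsum_def)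
  qed
  thus ?thesis by blast
qed

definition Span :: "(int \<times> int \<times> int \<Rightarrow> H) \<Rightarrow> H \<Rightarrow> bool" where
  "Span phi h = (\<exists>S c. finite S \<and> S \<subseteq> JJ \<and> h = (\<Sum>t\<in>S. sc (c t) * phi t))"

lemma sum_extend:
  assumes "finite T" "S \<subseteq> T"
  shows "(\<Sum>t\<in>T. sc (if t \<in> S then c t else 0) * phi t) = (\<Sum>t\<in>S. sc (c t) * (phi t :: H))"
  by (rule sum.mono_neutral_cong_right) (use assms in \<open>auto simp: sc_zero\<close>)

lemma Span_zero: "Span phi 0"
  unfolding Span_def by (rule exI[of _ "{}"]) auto

lemma Span_single: "admissible t \<Longrightarrow> Span phi (sc k * phi t)"
  unfolding Span_def by (rule exI[of _ "{t}"], rule exI[of _ "\<lambda>_. k"]) (auto simp: JJ_def)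

lemma Span_add:
  assumes "Span phi h1" "Span phi h2" shows "Span phi (h1 + h2)"
proof -
  obtain S1 c1 where 1: "finite S1" "S1 \<subseteq> JJ" "h1 = (\<Sum>t\<in>S1. sc (c1 t) * phi t)"
    using assms(1) unfolding Span_def by blast
  obtain S2 c2 where 2: "finite S2" "S2 \<subseteq> JJ" "h2 = (\<Sum>t\<in>S2. sc (c2 t) * phi t)"
    using assms(2) unfolding Span_def by blast
  define c where "c t = (if t \<in> S1 then c1 t else 0) + (if t \<in> S2 then c2 t else 0)" for t
  have "(\<Sum>t\<in>S1 \<union> S2. sc (c t) * phi t) =
     (\<Sum>t\<in>S1 \<union> S2. sc (if t \<in> S1 then c1 t else 0) * phi t) + (\<Sum>t\<in>S1 \<union> S2. sc (if t \<in> S2 then c2 t else 0) * phi t)"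
    unfolding c_def sc_add by (simp add: distrib_right sum.distrib)
  also have "\<dots> = h1 + h2"
    using sum_extend[of "S1 \<union> S2" S1 c1 phi] sum_extend[of "S1 \<union> S2" S2 c2 phi] 1 2 by simp
  finally show ?thesis unfolding Span_def using 1 2 by (intro exI[of _ "S1 \<union> S2"] exI[of _ c]) auto
qed

lemma Span_sum: "finite A \<Longrightarrow> (\<And>x. x \<in> A \<Longrightarrow> Span phi (f x)) \<Longrightarrow> Span phi (sum f A)"
  by (induction A rule: finite_induct) (auto intro: Span_add Span_zero)

lemma finite_level: "finite {m. tsum m = n}"
proof -
  have "{m. tsum m = n} \<subseteq> {..n} \<times> {..n} \<times> {..n}" by (auto simp: tsum_def)
  thus ?thesis by (rule finite_subset) auto
qed

lemma spanning:
  assumes sf: "schur_family phi"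
  shows "(\<forall>m. mc p m \<noteq> 0 \<longrightarrow> tsum m < n) \<Longrightarrow> Span phi p"
proof (induction n arbitrary: p)
  case 0
  hence "p = 0" by (intro mc_ext) auto
  thus ?case using Span_zero by simp
next
  case (Suc n)
  define M where "M = {m. tsum m = n}"
  define lc where "lc m = mc (phi (tr m)) m" for m
  define s where "s = (\<Sum>m\<in>M. sc (mc p m / lc m) * phi (tr m))"
  define d where "d = p - s"
  have g: "good phi m" for m using main_good[OF sf] .
  have fM: "finite M" unfolding M_def by (rule finite_level)
  have mcs: "mc s m' = (\<Sum>m\<in>M. mc p m / lc m * mc (phi (tr m)) m')" for m'
    unfolding s_def by (simp add: mc_sum mc_sc)
  have "tsum m' < n" if "mc d m' \<noteq> 0" for m'
  proof (rule ccontr)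
    assume "\<not> tsum m' < n"
    hence ge: "tsum m' \<ge> n" by simp
    show False
    proof (cases "tsum m' = n")
      case True
      have "mc s m' = (\<Sum>m\<in>M. if m = m' then mc p m' else 0)"
        unfolding mcs
      proof (rule sum.cong)
        fix m assume "m \<in> M"
        hence tm: "tsum m = n" by (simp add: M_def)
        show "mc p m / lc m * mc (phi (tr m)) m' = (if m = m' then mc p m' else 0)"
        proof (cases "m = m'")
          case True
          have "lc m \<noteq> 0" using g[of m] unfolding lc_def good_def by simp
          thus ?thesis using True unfolding lc_def by simp
        next
          case False
          have gm: "\<forall>m''. tsum m'' = tsum m \<and> m'' \<noteq> m \<longrightarrow> mc (phi (tr m)) m'' = 0"
            using g[of m] unfolding good_def by blast
          hence "tsum m' = tsum m \<and> m' \<noteq> m \<longrightarrow> mc (phi (tr m)) m' = 0" by (rule spec)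
          hence "mc (phi (tr m)) m' = 0" using False \<open>tsum m' = n\<close> tm by simp
          thus ?thesis using False by simp
        qed
      qed simp
      also have "\<dots> = mc p m'" using fM True by (simp add: M_def)
      finally show False using that unfolding d_def by (simp add: mc_diff)
    next
      case False
      hence gt: "tsum m' > n" using ge by simp
      have "mc p m' = 0" using Suc.prems gt by (meson not_less_eq)
      moreover have "mc (phi (tr m)) m' = 0" if "m \<in> M" for m
      proof (rule ccontr)
        assume "mc (phi (tr m)) m' \<noteq> 0"
        moreover have "phi (tr m) \<in> PP n" using g[of m] that unfolding good_def M_def by simp
        ultimately have "tsum m' \<le> n" unfolding PP_def by blast
        thus False using gt by simp
      qed
      ultimately have "mc d m' = 0" unfolding d_def by (simp add: mc_diff mcs)
      thus False using that by simp
    qed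
  qed
  hence "Span phi d" using Suc.IH by blast
  moreover have "Span phi s" unfolding s_def
    by (rule Span_sum[OF fM]) (rule Span_single[OF tr_adm])
  ultimately have "Span phi (d + s)" by (rule Span_add)
  thus ?case unfolding d_def by simp
qed

lemma independence:
  assumes sf: "schur_family phi" and S: "finite S" "S \<subseteq> JJ" and z: "(\<Sum>t\<in>S. sc (c t) * phi t) = 0"
  shows "\<forall>t\<in>S. c t = 0"
proof (rule ccontr)
  assume "\<not> (\<forall>t\<in>S. c t = 0)"
  define S' where "S' = {t\<in>S. c t \<noteq> 0}"
  have ne: "S' \<noteq> {}" and fS': "finite S'" using \<open>\<not> _\<close> S unfolding S'_def by auto
  define N where "N = Max ((\<lambda>t. tsum (untr t)) ` S')"
  have "N \<in> (\<lambda>t. tsum (untr t)) ` S'"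
    using Max_in[of "(\<lambda>t. tsum (untr t)) ` S'"] ne fS' unfolding N_def by blast
  then obtain t1 where t1: "t1 \<in> S'" "tsum (untr t1) = N" by (metis imageE)
  have adm: "admissible t" if "t \<in> S" for t using S that unfolding JJ_def by auto
  have g: "good phi m" for m using main_good[OF sf] .
  define m1 where "m1 = untr t1"
  have t1S: "t1 \<in> S" using t1 unfolding S'_def by auto
  have ph1: "phi t1 = phi (tr m1)" unfolding m1_def using tr_untr[OF adm[OF t1S]] by simp
  have other: "c t * mc (phi t) m1 = 0" if "t \<in> S" "t \<noteq> t1" for t
  proof (rule ccontr)
    assume nz: "c t * mc (phi t) m1 \<noteq> 0"
    hence tS': "t \<in> S'" using that unfolding S'_def by auto
    have le: "tsum (untr t) \<le> N" unfolding N_def using fS' tS' by simp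
    have pt: "phi t = phi (tr (untr t))" using tr_untr[OF adm[OF that(1)]] by simp
    have nz2: "mc (phi (tr (untr t))) m1 \<noteq> 0" using nz pt by simp
    hence "tsum m1 \<le> tsum (untr t)" using g[of "untr t"] unfolding good_def PP_def by blast
    hence eqN: "tsum m1 = tsum (untr t)" using le t1 unfolding m1_def by simp
    have "m1 \<noteq> untr t"
    proof
      assume "m1 = untr t"
      hence "tr m1 = t" using tr_untr[OF adm[OF that(1)]] by simp
      moreover have "tr m1 = t1" unfolding m1_def using tr_untr[OF adm[OF t1S]] .
      ultimately show False using that by simp
    qed
    moreover have "\<forall>m''. tsum m'' = tsum (untr t) \<and> m'' \<noteq> untr t \<longrightarrow> mc (phi (tr (untr t))) m'' = 0"
      using g[of "untr t"] unfolding good_def by blast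
    hence "tsum m1 = tsum (untr t) \<and> m1 \<noteq> untr t \<longrightarrow> mc (phi (tr (untr t))) m1 = 0" by (rule spec)
    ultimately show False using eqN nz2 by simp
  qed
  have "mc (\<Sum>t\<in>S. sc (c t) * phi t) m1 = (\<Sum>t\<in>S. c t * mc (phi t) m1)"
    by (simp add: mc_sum mc_sc)
  also have "\<dots> = c t1 * mc (phi t1) m1"
    using sum.remove[OF S(1) t1S, of "\<lambda>t. c t * mc (phi t) m1"] other
    by (simp add: sum.neutral)
  finally have "c t1 * mc (phi t1) m1 = 0" using z by simp
  moreover have "c t1 \<noteq> 0" using t1 unfolding S'_def by auto
  moreover have "mc (phi t1) m1 \<noteq> 0" using g[of m1] ph1 unfolding good_def by simp
  ultimately show False by simp
qed

theorem mainTheorem6: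
  fixes phi :: "int \<times> int \<times> int \<Rightarrow> H"
  assumes "schur_family phi"
  shows "(\<forall>S c. finite S \<and> S \<subseteq> JJ \<and> (\<Sum>t\<in>S. sc (c t) * phi t) = 0 \<longrightarrow> (\<forall>t\<in>S. c t = 0))
       \<and> (\<forall>h :: H. \<exists>S c. finite S \<and> S \<subseteq> JJ \<and> h = (\<Sum>t\<in>S. sc (c t) * phi t))"
proof
  show "\<forall>S c. finite S \<and> S \<subseteq> JJ \<and> (\<Sum>t\<in>S. sc (c t) * phi t) = 0 \<longrightarrow> (\<forall>t\<in>S. c t = 0)"
    using independence[OF assms] by blast
  show "\<forall>h :: H. \<exists>S c. finite S \<and> S \<subseteq> JJ \<and> h = (\<Sum>t\<in>S. sc (c t) * phi t)"
  proof
    fix h :: H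
    obtain n where "\<forall>m. mc h m \<noteq> 0 \<longrightarrow> tsum m < n" using mc_bound by blast
    hence "Span phi h" by (rule spanning[OF assms])
    thus "\<exists>S c. finite S \<and> S \<subseteq> JJ \<and> h = (\<Sum>t\<in>S. sc (c t) * phi t)" unfolding Span_def .
  qed
qed

end
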